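(* In the truncated Gale–Shapley algorithm described in the context, with a weight function $w$ respecting the preferences, for every $i\ge 2$ we have $w(L_i)\le(\Delta-1)\,w_i(B)$.
   Context: Instance: a simple bipartite graph $\mathcal{G}=(R\cup B,E)$ (red nodes $R$, blue nodes $B$) without isolated nodes and with maximum degree $\Delta$, each node having a linear preference order on its neighbours. Algorithm (distributed Gale–Shapley): each blue $b$ keeps $p(b)$ (current partner or $\bot$), initially $\bot$. Each red $r$ keeps a list $C(r)$, initially all neighbours in decreasing preference; $c(r)$ (candidate awaiting response, or $\bot$), initially $\bot$; $p(r)$ (partner or $\bot$), initially $\bot$. Each round consists of a blue turn then a red turn. Blue turn, for each $b$: let $P$ be the set of neighbours that sent `propose'; if $P=\emptyset$ do nothing. Otherwise let $Q=P\cup\{p(b)\}$ if $p(b)\ne\bot$, else $Q=P$; let $q$ be $b$'s most preferred node in $Q$; if $q\ne p(b)$, send `break' to $p(b)$ (if $p(b)\ne\bot$), send `accept' to $q$, and set $p(b)\gets q$; send `reject' to every $r\in P\setminus\{q\}$. Red turn, for each $r$: (1) if $c(r)\neq\bot$, receive the message from $c(r)$; if `accept' set $p(r)\gets c(r)$; if `reject' remove $c(r)$ from $C(r)$; then set $c(r)\gets\bot$. (2) If $p(r)\ne\bot$ and $p(r)$ sent `break', remove $p(r)$ from $C(r)$ and set $p(r)\gets\bot$. (3) If $p(r)=\bot$ and $C(r)$ is nonempty, set $c(r)$ to the first element of $C(r)$ and send `propose' to it. Notation: a subscript $i$ denotes the value at the end of round $i$. An edge $\{r,b\}$ is lost when $r$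 removes $b$ from $C(r)$; $L_i\subseteq E$ is the set of edges lost by the end of round $i$. Let $w:E\to\mathbb{Z}_{>0}$ be a weight function respecting preferences: whenever a node $v$ prefers $x$ over $y$, $w(\{v,x\})\ge w(\{v,y\})$; $w(F)=\sum_{e\in F}w(e)$. For $b\in B$, $w_i(b)=w(\{b,p_i(b)\})$ if $p_i(b)\ne\bot$ and $w_i(b)=0$ otherwise; $w_i(B)=\sum_{b\in B}w_i(b)$. *)

theory Defs
  imports Main
begin

(* Graph: vertex sets R (red), B (blue); edges E are 2-element sets {r,b}.
   Preferences: rank v x < rank v y  means  v prefers x over y
   (rank v is injective on the neighbourhood of v, i.e. a linear order). *)

definition nbrs :: "'v set set \<Rightarrow> 'v \<Rightarrow> 'v set" where
  "nbrs E v = {u. {v, u} \<in> E}"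

definition prefers :: "('v \<Rightarrow> 'v \<Rightarrow> nat) \<Rightarrow> 'v \<Rightarrow> 'v \<Rightarrow> 'v \<Rightarrow> bool" where
  "prefers rank v x y \<longleftrightarrow> rank v x < rank v y"

definition max_degree :: "'v set set \<Rightarrow> 'v set \<Rightarrow> nat" where
  "max_degree E V = Max ((\<lambda>v. card (nbrs E v)) ` V)"

(* State at the end of a round:  pB = p(b) for blue nodes,
   Cr = C(r), cr = c(r), pr = p(r) for red nodes; None = \<bottom>. *)
record 'v gs_state =
  pB :: "'v \<Rightarrow> 'v option"
  Cr :: "'v \<Rightarrow> 'v list"
  cr :: "'v \<Rightarrow> 'v option"
  pr :: "'v \<Rightarrow> 'v option"

definition best :: "('v \<Rightarrow> 'v \<Rightarrow> nat) \<Rightarrow> 'v \<Rightarrow> 'v set \<Rightarrow> 'v" where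
  "best rank v Q = (THE q. q \<in> Q \<and> (\<forall>x\<in>Q. \<not> prefers rank v x q))"

(* the proposals received by b in a blue turn: those sent in the preceding red turn *)
definition proposers :: "'v set \<Rightarrow> 'v gs_state \<Rightarrow> 'v \<Rightarrow> 'v set" where
  "proposers R s b = {r \<in> R. cr s r = Some b}"

definition choice :: "'v set \<Rightarrow> ('v \<Rightarrow> 'v \<Rightarrow> nat) \<Rightarrow> 'v gs_state \<Rightarrow> 'v \<Rightarrow> 'v" where
  "choice R rank s b = best rank b (proposers R s b \<union> set_option (pB s b))"

definition switches :: "'v set \<Rightarrow> ('v \<Rightarrow> 'v \<Rightarrow> nat) \<Rightarrow> 'v gs_state \<Rightarrow> 'v \<Rightarrow> bool" where
  "switches R rank s b \<longleftrightarrow> proposers R s b \<noteq> {} \<and> pB s b \<noteq> Some (choice R rank s b)"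

(* messages sent by blue b to red r in the blue turn (state s = end of previous round) *)
definition msg_accept :: "'v set \<Rightarrow> 'v set \<Rightarrow> ('v \<Rightarrow> 'v \<Rightarrow> nat) \<Rightarrow> 'v gs_state \<Rightarrow> 'v \<Rightarrow> 'v \<Rightarrow> bool" where
  "msg_accept R B rank s b r \<longleftrightarrow> b \<in> B \<and> switches R rank s b \<and> r = choice R rank s b"

definition msg_reject :: "'v set \<Rightarrow> 'v set \<Rightarrow> ('v \<Rightarrow> 'v \<Rightarrow> nat) \<Rightarrow> 'v gs_state \<Rightarrow> 'v \<Rightarrow> 'v \<Rightarrow> bool" where
  "msg_reject R B rank s b r \<longleftrightarrow> b \<in> B \<and> r \<in> proposers R s b \<and> r \<noteq> choice R rank s b"

definition msg_break :: "'v set \<Rightarrow> 'v set \<Rightarrow> ('v \<Rightarrow> 'v \<Rightarrow> nat) \<Rightarrow> 'v gs_state \<Rightarrow> 'v \<Rightarrow> 'v \<Rightarrow> bool" where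
  "msg_break R B rank s b r \<longleftrightarrow> b \<in> B \<and> switches R rank s b \<and> pB s b = Some r"

definition blue_partner :: "'v set \<Rightarrow> 'v set \<Rightarrow> ('v \<Rightarrow> 'v \<Rightarrow> nat) \<Rightarrow> 'v gs_state \<Rightarrow> 'v \<Rightarrow> 'v option" where
  "blue_partner R B rank s b =
     (if b \<in> B \<and> switches R rank s b then Some (choice R rank s b) else pB s b)"

definition red1 :: "'v set \<Rightarrow> 'v set \<Rightarrow> ('v \<Rightarrow> 'v \<Rightarrow> nat) \<Rightarrow> 'v gs_state \<Rightarrow> 'v
    \<Rightarrow> 'v option \<times> 'v list" where
  "red1 R B rank s r =
     (case cr s r of
        None \<Rightarrow> (pr s r, Cr s r)
      | Some b \<Rightarrow>
          (if msg_accept R B rank s b r then Some b else pr s r,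
           if msg_reject R B rank s b r then removeAll b (Cr s r) else Cr s r))"

definition red2 :: "'v set \<Rightarrow> 'v set \<Rightarrow> ('v \<Rightarrow> 'v \<Rightarrow> nat) \<Rightarrow> 'v gs_state \<Rightarrow> 'v
    \<Rightarrow> 'v option \<times> 'v list" where
  "red2 R B rank s r =
     (case red1 R B rank s r of
        (None, C1) \<Rightarrow> (None, C1)
      | (Some b', C1) \<Rightarrow>
          (if msg_break R B rank s b' r then (None, removeAll b' C1) else (Some b', C1)))"

definition red3 :: "'v set \<Rightarrow> 'v set \<Rightarrow> ('v \<Rightarrow> 'v \<Rightarrow> nat) \<Rightarrow> 'v gs_state \<Rightarrow> 'v \<Rightarrow> 'v option" where
  "red3 R B rank s r =
     (case red2 R B rank s r of (p2, C2) \<Rightarrow>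
        (if p2 = None \<and> C2 \<noteq> [] then Some (hd C2) else None))"

definition gs_round :: "'v set \<Rightarrow> 'v set \<Rightarrow> ('v \<Rightarrow> 'v \<Rightarrow> nat) \<Rightarrow> 'v gs_state \<Rightarrow> 'v gs_state" where
  "gs_round R B rank s =
     \<lparr> pB = (\<lambda>b. blue_partner R B rank s b),
       Cr = (\<lambda>r. if r \<in> R then snd (red2 R B rank s r) else Cr s r),
       cr = (\<lambda>r. if r \<in> R then red3 R B rank s r else cr s r),
       pr = (\<lambda>r. if r \<in> R then fst (red2 R B rank s r) else pr s r) \<rparr>"

(* initial state: C(r) = all neighbours in decreasing preference *)
definition gs_init :: "'v set set \<Rightarrow> 'v set \<Rightarrow> ('v \<Rightarrow> 'v \<Rightarrow> nat) \<Rightarrow> 'v gs_state" where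
  "gs_init E R rank =
     \<lparr> pB = (\<lambda>_. None),
       Cr = (\<lambda>r. if r \<in> R then sorted_key_list_of_set (rank r) (nbrs E r) else []),
       cr = (\<lambda>_. None),
       pr = (\<lambda>_. None) \<rparr>"

(* state at the end of round i (round 0 = initial state) *)
primrec gs_run :: "'v set set \<Rightarrow> 'v set \<Rightarrow> 'v set \<Rightarrow> ('v \<Rightarrow> 'v \<Rightarrow> nat) \<Rightarrow> nat \<Rightarrow> 'v gs_state" where
  "gs_run E R B rank 0 = gs_init E R rank"
| "gs_run E R B rank (Suc i) = gs_round R B rank (gs_run E R B rank i)"

primrec lost :: "'v set set \<Rightarrow> 'v set \<Rightarrow> 'v set \<Rightarrow> ('v \<Rightarrow> 'v \<Rightarrow> nat) \<Rightarrow> nat \<Rightarrow> 'v set set" where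
  "lost E R B rank 0 = {}"
| "lost E R B rank (Suc i) = lost E R B rank i \<union>
     {{r, b} | r b. r \<in> R \<and> b \<in> set (Cr (gs_run E R B rank i) r)
                  \<and> b \<notin> set (Cr (gs_run E R B rank (Suc i)) r)}"

definition blue_weight :: "'v set set \<Rightarrow> 'v set \<Rightarrow> 'v set \<Rightarrow> ('v \<Rightarrow> 'v \<Rightarrow> nat)
    \<Rightarrow> ('v set \<Rightarrow> nat) \<Rightarrow> nat \<Rightarrow> nat" where
  "blue_weight E R B rank w i =
     (\<Sum>b\<in>B. case pB (gs_run E R B rank i) b of None \<Rightarrow> 0 | Some r \<Rightarrow> w {b, r})"

end

theory Submission
  imports Defs
begin

lemma best_prop:
  assumes "finite Q" "Q \<noteq> {}" "inj_on (rank v) Q"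
  shows "best rank v Q \<in> Q \<and> (\<forall>x\<in>Q. rank v (best rank v Q) \<le> rank v x)"
proof -
  define m where "m = Min (rank v ` Q)"
  have "m \<in> rank v ` Q" unfolding m_def using assms by (intro Min_in) auto
  then obtain q where q: "q \<in> Q" "rank v q = m" by auto
  have qmin: "\<forall>x\<in>Q. rank v q \<le> rank v x" using q assms unfolding m_def by auto
  have "best rank v Q = q"
    unfolding best_def
  proof (rule the_equality)
    show "q \<in> Q \<and> (\<forall>x\<in>Q. \<not> prefers rank v x q)" using q qmin by (auto simp: prefers_def not_less)
  next
    fix q' assume h: "q' \<in> Q \<and> (\<forall>x\<in>Q. \<not> prefers rank v x q')"
    then have "rank v q' \<le> rank v q" using q by (auto simp: prefers_def not_less)
    moreover have "rank v q \<le> rank v q'" using qmin h by auto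
    ultimately show "q' = q" using assms(3) h q by (meson antisym inj_onD)
  qed
  then show ?thesis using q qmin by simp
qed

lemma set_skl:
  assumes i: "inj_on (f::'a\<Rightarrow>nat) A" and fin: "finite A"
  shows "set (sorted_key_list_of_set f A) = A"
proof -
  interpret fo: folding_on A "insort_key f" "[]"
  proof
    fix x y assume "x \<in> A" "y \<in> A"
    show "insort_key f y \<circ> insort_key f x = insort_key f x \<circ> insort_key f y"
    proof (rule ext)
      fix xs show "(insort_key f y \<circ> insort_key f x) xs = (insort_key f x \<circ> insort_key f y) xs"
        using i \<open>x \<in> A\<close> \<open>y \<in> A\<close> by (induction xs) (auto simp: inj_onD)
    qed
  qed
  have "C \<subseteq> A \<Longrightarrow> set (folding_on.F (insort_key f) [] C) = C" for C
    using finite_subset[OF _ fin, of C]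
  proof (induction C rule: infinite_finite_induct)
    case (infinite C) then show ?case by blast
  next
    case empty then show ?case by (simp add: fo.empty)
  next
    case (insert x F) then show ?case by (simp add: fo.insert set_insort_key)
  qed
  then show ?thesis by (simp add: sorted_key_list_of_set_def)
qed
lemma nbrs_sym: "u \<in> nbrs E v \<longleftrightarrow> v \<in> nbrs E u"
  by (auto simp: nbrs_def insert_commute)

locale gs =
  fixes R B :: "'v set" and E :: "'v set set" and rank :: "'v \<Rightarrow> 'v \<Rightarrow> nat"
    and w :: "'v set \<Rightarrow> nat"
  assumes finR: "finite R" and finB: "finite B" and disj: "R \<inter> B = {}"
    and bip: "E \<subseteq> {{r, b} | r b. r \<in> R \<and> b \<in> B}"
    and linpref: "\<forall>v\<in>R \<union> B. inj_on (rank v) (nbrs E v)"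
    and wresp: "\<forall>v x y. x \<in> nbrs E v \<and> y \<in> nbrs E v \<and> prefers rank v x y
                  \<longrightarrow> w {v, y} \<le> w {v, x}"
begin

lemma nbrs_B: "b \<in> B \<Longrightarrow> nbrs E b \<subseteq> R"
proof
  fix u assume b: "b \<in> B" and u: "u \<in> nbrs E b"
  then have "{b,u} \<in> E" by (simp add: nbrs_def)
  then obtain r b' where "{b,u} = {r,b'}" "r \<in> R" "b' \<in> B" using bip by blast
  then show "u \<in> R" using b disj by (auto simp: doubleton_eq_iff)
qed

lemma nbrs_R: "r \<in> R \<Longrightarrow> nbrs E r \<subseteq> B"
proof
  fix u assume b: "r \<in> R" and u: "u \<in> nbrs E r"
  then have "{r,u} \<in> E" by (simp add: nbrs_def)
  then obtain r' b' where "{r,u} = {r',b'}" "r' \<in> R" "b' \<in> B" using bip by blast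
  then show "u \<in> B" using b disj by (auto simp: doubleton_eq_iff)
qed

definition Inv :: "'v gs_state \<Rightarrow> bool" where
  "Inv s \<longleftrightarrow>
     (\<forall>r. r \<notin> R \<longrightarrow> Cr s r = [] \<and> cr s r = None \<and> pr s r = None) \<and>
     (\<forall>r\<in>R. set (Cr s r) \<subseteq> nbrs E r) \<and>
     (\<forall>r b. cr s r = Some b \<longrightarrow> b \<in> set (Cr s r) \<and> pr s r = None) \<and>
     (\<forall>b r. pB s b = Some r \<longrightarrow> b \<in> B \<and> r \<in> R \<and> b \<in> set (Cr s r) \<and> pr s r = Some b)"

lemma wle:
  assumes "b \<in> B" "x \<in> nbrs E b" "y \<in> nbrs E b" "rank b x \<le> rank b y"
  shows "w {b, y} \<le> w {b, x}"
proof (cases "x = y")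
  case False
  then have "rank b x \<noteq> rank b y" using linpref assms by (meson UnI2 inj_onD)
  then have "prefers rank b x y" using assms by (simp add: prefers_def)
  then show ?thesis using wresp assms by blast
qed simp

lemma Q_props:
  assumes I: "Inv s" and b: "b \<in> B" and P: "proposers R s b \<noteq> {}"
  shows "choice R rank s b \<in> proposers R s b \<union> set_option (pB s b)"
    "\<forall>x\<in>proposers R s b \<union> set_option (pB s b). rank b (choice R rank s b) \<le> rank b x"
    "proposers R s b \<union> set_option (pB s b) \<subseteq> nbrs E b"
proof -
  let ?Q = "proposers R s b \<union> set_option (pB s b)"
  have sub: "?Q \<subseteq> nbrs E b"
  proof
    fix x assume "x \<in> ?Q"
    then show "x \<in> nbrs E b"
    proof
      assume "x \<in> proposers R s b"
      then have "x \<in> R" "cr s x = Some b" by (auto simp: proposers_def)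
      then have "b \<in> nbrs E x" using I unfolding Inv_def by blast
      then show ?thesis by (simp add: nbrs_sym)
    next
      assume "x \<in> set_option (pB s b)"
      then have "pB s b = Some x" by auto
      then have "x \<in> R" "b \<in> set (Cr s x)" using I unfolding Inv_def by blast+
      then have "b \<in> nbrs E x" using I unfolding Inv_def by blast
      then show ?thesis by (simp add: nbrs_sym)
    qed
  qed
  have fin: "finite ?Q" using finR by (auto simp: proposers_def intro: finite_subset)
  have inj: "inj_on (rank b) ?Q" using linpref b sub by (meson UnI2 inj_on_subset)
  have "?Q \<noteq> {}" using P by auto
  from best_prop[where rank=rank and v=b, OF fin this inj]
  show "choice R rank s b \<in> ?Q" "\<forall>x\<in>?Q. rank b (choice R rank s b) \<le> rank b x"
    by (simp_all add: choice_def)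
  show "?Q \<subseteq> nbrs E b" by (fact sub)
qed

lemma blue_after:
  assumes I: "Inv s" and b: "b \<in> B" and P: "proposers R s b \<noteq> {}"
  shows "pB (gs_round R B rank s) b = Some (choice R rank s b)"
  using assms by (auto simp: gs_round_def blue_partner_def switches_def)

lemma Inv_init: "Inv (gs_init E R rank)"
proof -
  have "set (Cr (gs_init E R rank) r) \<subseteq> nbrs E r" if r: "r \<in> R" for r
  proof -
    have inj: "inj_on (rank r) (nbrs E r)" using linpref r by blast
    have fin: "finite (nbrs E r)" using nbrs_R[OF r] finB by (rule finite_subset)
    have "set (sorted_key_list_of_set (rank r) (nbrs E r)) = nbrs E r"
      using set_skl[OF inj fin] .
    then show ?thesis using r by (simp add: gs_init_def)
  qed
  then show ?thesis by (auto simp: Inv_def gs_init_def)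
qed

lemma red1_shrink: "set (snd (red1 R B rank s r)) \<subseteq> set (Cr s r)"
  by (cases "cr s r") (auto simp: red1_def)

lemma red2_shrink: "set (snd (red2 R B rank s r)) \<subseteq> set (snd (red1 R B rank s r))"
proof -
  obtain p C where pc: "red1 R B rank s r = (p, C)" by fastforce
  show ?thesis by (cases p) (auto simp: red2_def pc)
qed

lemma red_shrink: "set (snd (red2 R B rank s r)) \<subseteq> set (Cr s r)"
  using red1_shrink red2_shrink by blast

lemma shrink_step: "set (Cr (gs_round R B rank s) r) \<subseteq> set (Cr s r)"
  using red_shrink by (auto simp: gs_round_def)

lemma red_lose:
  assumes "b \<in> set (Cr s r)" "b \<notin> set (snd (red2 R B rank s r))"
  shows "(cr s r = Some b \<and> msg_reject R B rank s b r) \<or> msg_break R B rank s b r"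
proof -
  obtain p C where pc: "red1 R B rank s r = (p, C)" by fastforce
  have C: "C = Cr s r \<or> (cr s r = Some b \<and> msg_reject R B rank s b r) \<or> b \<in> set C \<or> b \<notin> set (Cr s r)"
  proof (cases "cr s r")
    case None then show ?thesis using pc by (simp add: red1_def)
  next
    case (Some b0)
    then show ?thesis using pc by (auto simp: red1_def split: if_splits)
  qed
  show ?thesis
  proof (cases p)
    case None
    then have "snd (red2 R B rank s r) = C" by (simp add: red2_def pc)
    then show ?thesis using C assms by auto
  next
    case (Some b')
    then have "snd (red2 R B rank s r) = (if msg_break R B rank s b' r then removeAll b' C else C)"
      by (simp add: red2_def pc)
    then show ?thesis using C assms by (auto split: if_splits)
  qed
qed

lemma Inv_step:
  assumes I: "Inv s"
  shows "Inv (gs_round R B rank s)"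
proof -
  let ?s = "gs_round R B rank s"
  have a: "\<forall>r. r \<notin> R \<longrightarrow> Cr ?s r = [] \<and> cr ?s r = None \<and> pr ?s r = None"
    using I by (auto simp: Inv_def gs_round_def)
  have b: "\<forall>r\<in>R. set (Cr ?s r) \<subseteq> nbrs E r"
    using I shrink_step unfolding Inv_def by blast
  have c: "\<forall>r b. cr ?s r = Some b \<longrightarrow> b \<in> set (Cr ?s r) \<and> pr ?s r = None"
  proof (intro allI impI)
    fix r b assume h: "cr ?s r = Some b"
    show "b \<in> set (Cr ?s r) \<and> pr ?s r = None"
    proof (cases "r \<in> R")
      case False then show ?thesis using h a I by (auto simp: Inv_def gs_round_def)
    next
      case True
      then have "red3 R B rank s r = Some b" using h by (simp add: gs_round_def)
      then show ?thesis using True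
        by (auto simp: gs_round_def red3_def split: prod.splits if_splits)
    qed
  qed
  have d: "\<forall>b r. pB ?s b = Some r \<longrightarrow> b \<in> B \<and> r \<in> R \<and> b \<in> set (Cr ?s r) \<and> pr ?s r = Some b"
  proof (intro allI impI)
    fix b r assume h: "pB ?s b = Some r"
    show "b \<in> B \<and> r \<in> R \<and> b \<in> set (Cr ?s r) \<and> pr ?s r = Some b"
    proof (cases "b \<in> B \<and> switches R rank s b")
      case True
      then have r: "r = choice R rank s b" using h by (simp add: gs_round_def blue_partner_def)
      have P: "proposers R s b \<noteq> {}" using True by (simp add: switches_def)
      have ne: "pB s b \<noteq> Some r" using True r by (simp add: switches_def)
      have "r \<in> proposers R s b" using Q_props(1)[OF I _ P] True r ne by auto
      then have rR: "r \<in> R" and cr: "cr s r = Some b" by (auto simp: proposers_def)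
      then have bC: "b \<in> set (Cr s r)" and pn: "pr s r = None" using I unfolding Inv_def by blast+
      have acc: "msg_accept R B rank s b r" using True r by (simp add: msg_accept_def)
      have nrej: "\<not> msg_reject R B rank s b r" using r by (simp add: msg_reject_def)
      have nbr: "\<not> msg_break R B rank s b r" using ne by (simp add: msg_break_def)
      have "red2 R B rank s r = (Some b, Cr s r)"
        using cr acc nrej nbr by (simp add: red2_def red1_def)
      then show ?thesis using True rR bC by (simp add: gs_round_def)
    next
      case False
      then have h': "pB s b = Some r" using h by (auto simp: gs_round_def blue_partner_def)
      then have bB: "b \<in> B" and rR: "r \<in> R" and bC: "b \<in> set (Cr s r)" and ps: "pr s r = Some b"
        using I unfolding Inv_def by blast+
      have ns: "\<not> switches R rank s b" using False bB by simp
      have crn: "cr s r = None" using I ps unfolding Inv_def by (cases "cr s r") auto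
      have nbr: "\<not> msg_break R B rank s b r" using ns by (simp add: msg_break_def)
      have "red2 R B rank s r = (Some b, Cr s r)"
        using crn ps nbr by (simp add: red2_def red1_def)
      then show ?thesis using bB rR bC by (simp add: gs_round_def)
    qed
  qed
  show ?thesis using a b c d by (simp add: Inv_def)
qed

lemma mono_step:
  assumes I: "Inv s" and h: "pB s b = Some r"
  shows "\<exists>r'. pB (gs_round R B rank s) b = Some r' \<and> w {b, r} \<le> w {b, r'}"
proof -
  have bB: "b \<in> B" using I h unfolding Inv_def by blast
  show ?thesis
  proof (cases "proposers R s b = {}")
    case True
    then show ?thesis using h by (auto simp: gs_round_def blue_partner_def switches_def)
  next
    case False
    note Q = Q_props[OF I bB False]
    have "r \<in> proposers R s b \<union> set_option (pB s b)" using h by simp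
    then have "w {b, r} \<le> w {b, choice R rank s b}"
      using Q by (intro wle[OF bB]) auto
    then show ?thesis using blue_after[OF I bB False] by auto
  qed
qed

lemma loss_step:
  assumes I: "Inv s" and rR: "r \<in> R" and b1: "b \<in> set (Cr s r)"
    and b2: "b \<notin> set (Cr (gs_round R B rank s) r)"
  shows "b \<in> B \<and> (\<exists>r'. pB (gs_round R B rank s) b = Some r' \<and> w {b, r} \<le> w {b, r'})"
proof -
  have "b \<notin> set (snd (red2 R B rank s r))" using b2 rR by (simp add: gs_round_def)
  from red_lose[OF b1 this]
  have bB: "b \<in> B" and P: "proposers R s b \<noteq> {}"
    and rQ: "r \<in> proposers R s b \<union> set_option (pB s b)"
    by (auto simp: msg_reject_def msg_break_def switches_def)
  note Q = Q_props[OF I bB P]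
  have "w {b, r} \<le> w {b, choice R rank s b}"
    using Q rQ by (intro wle[OF bB]) auto
  then show ?thesis using blue_after[OF I bB P] bB by auto
qed

abbreviation run where "run i \<equiv> gs_run E R B rank i"

lemma Inv_run: "Inv (run i)"
  by (induction i) (simp_all add: Inv_init Inv_step)

lemma shrink_run: "j \<le> i \<Longrightarrow> set (Cr (run i) r) \<subseteq> set (Cr (run j) r)"
proof (induction i rule: dec_induct)
  case (step k) then show ?case using shrink_step[of "run k" r] by simp
qed simp

lemma mono_run:
  "j \<le> i \<Longrightarrow> pB (run j) b = Some r \<Longrightarrow> \<exists>r'. pB (run i) b = Some r' \<and> w {b, r} \<le> w {b, r'}"
proof (induction i rule: dec_induct)
  case base then show ?case by auto
next
  case (step k)
  then obtain r' where r': "pB (run k) b = Some r'" "w {b, r} \<le> w {b, r'}" by auto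
  from mono_step[OF Inv_run r'(1)] obtain r'' where
    "pB (run (Suc k)) b = Some r''" "w {b, r'} \<le> w {b, r''}" by auto
  then show ?case using r' by auto
qed

lemma lost_char:
  "e \<in> lost E R B rank i \<Longrightarrow> \<exists>r b j. e = {r, b} \<and> r \<in> R \<and> j < i \<and>
      b \<in> set (Cr (run j) r) \<and> b \<notin> set (Cr (run (Suc j)) r)"
proof (induction i)
  case 0 then show ?case by simp
next
  case (Suc i)
  then show ?case by (auto intro: less_SucI)
qed

lemma lost_prop:
  assumes "e \<in> lost E R B rank i"
  shows "\<exists>r b r'. e = {r, b} \<and> r \<in> R \<and> b \<in> B \<and> r \<in> nbrs E b \<and>
      pB (run i) b = Some r' \<and> r' \<noteq> r \<and> w e \<le> w {b, r'}"
proof -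
  obtain r b j where e: "e = {r, b}" and rR: "r \<in> R" and ji: "j < i"
    and b1: "b \<in> set (Cr (run j) r)" and b2: "b \<notin> set (Cr (run (Suc j)) r)"
    using lost_char[OF assms] by blast
  have "b \<in> nbrs E r" using Inv_run[of j] rR b1 unfolding Inv_def by blast
  then have rn: "r \<in> nbrs E b" by (simp add: nbrs_sym)
  from loss_step[OF Inv_run rR b1] b2
  obtain r1 where bB: "b \<in> B" and r1: "pB (run (Suc j)) b = Some r1" "w {b, r} \<le> w {b, r1}"
    by auto
  from mono_run[OF _ r1(1), of i] ji obtain r' where
    r': "pB (run i) b = Some r'" "w {b, r1} \<le> w {b, r'}" by auto
  have "b \<in> set (Cr (run i) r')" using Inv_run[of i] r'(1) unfolding Inv_def by blast
  moreover have "b \<notin> set (Cr (run i) r)" using shrink_run[of "Suc j" i r] ji b2 by auto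
  ultimately have "r' \<noteq> r" by auto
  moreover have "w e \<le> w {b, r'}" using e r1 r' by (simp add: insert_commute)
  ultimately show ?thesis using e rR bB rn r' by blast
qed

lemma main:
  "(\<Sum>e\<in>lost E R B rank i. w e) \<le> (max_degree E (R \<union> B) - 1) * blue_weight E R B rank w i"
proof -
  let ?L = "lost E R B rank i"
  let ?D = "max_degree E (R \<union> B)"
  define wt where "wt b = (case pB (run i) b of None \<Rightarrow> 0 | Some r \<Rightarrow> w {b, r})" for b
  define Lb where "Lb b = {e \<in> ?L. b \<in> e}" for b
  have eB: "\<And>e b. e \<in> ?L \<Longrightarrow> b \<in> B \<Longrightarrow> b \<in> e \<Longrightarrow>
      \<exists>r r'. e = {r, b} \<and> r \<in> R \<and> r \<in> nbrs E b \<and>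
        pB (run i) b = Some r' \<and> r' \<noteq> r \<and> w e \<le> w {b, r'}"
  proof -
    fix e b assume h: "e \<in> ?L" "b \<in> B" "b \<in> e"
    from lost_prop[OF h(1)] obtain r b0 r' where
      p: "e = {r, b0}" "r \<in> R" "b0 \<in> B" "r \<in> nbrs E b0" "pB (run i) b0 = Some r'" "r' \<noteq> r" "w e \<le> w {b0, r'}"
      by blast
    have "b = b0" using h p disj by auto
    then show "\<exists>r r'. e = {r, b} \<and> r \<in> R \<and> r \<in> nbrs E b \<and>
        pB (run i) b = Some r' \<and> r' \<noteq> r \<and> w e \<le> w {b, r'}" using p by blast
  qed
  have finL: "finite ?L"
  proof (rule finite_subset)
    show "?L \<subseteq> (\<lambda>(r, b). {r, b}) ` (R \<times> B)"
    proof
      fix e assume "e \<in> ?L"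
      from lost_prop[OF this] show "e \<in> (\<lambda>(r, b). {r, b}) ` (R \<times> B)" by auto
    qed
    show "finite ((\<lambda>(r, b). {r, b}) ` (R \<times> B))" using finR finB by simp
  qed
  have Lun: "?L = (\<Union>b\<in>B. Lb b)"
  proof
    show "?L \<subseteq> (\<Union>b\<in>B. Lb b)"
    proof
      fix e assume "e \<in> ?L"
      from lost_prop[OF this] obtain r b where "e = {r, b}" "b \<in> B" by blast
      then show "e \<in> (\<Union>b\<in>B. Lb b)" using \<open>e \<in> ?L\<close> by (auto simp: Lb_def)
    qed
  qed (auto simp: Lb_def)
  have disjL: "\<forall>b\<in>B. \<forall>b'\<in>B. b \<noteq> b' \<longrightarrow> Lb b \<inter> Lb b' = {}"
  proof (intro ballI impI)
    fix b b' assume h: "b \<in> B" "b' \<in> B" "b \<noteq> b'"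
    show "Lb b \<inter> Lb b' = {}"
    proof (rule ccontr)
      assume "Lb b \<inter> Lb b' \<noteq> {}"
      then obtain e where e: "e \<in> ?L" "b \<in> e" "b' \<in> e" by (auto simp: Lb_def)
      from eB[OF e(1) h(1) e(2)] obtain r where "e = {r, b}" "r \<in> R" by blast
      then show False using e h disj by auto
    qed
  qed
  have finLb: "finite (Lb b)" for b using finL by (simp add: Lb_def)
  have "(\<Sum>e\<in>?L. w e) = (\<Sum>b\<in>B. \<Sum>e\<in>Lb b. w e)"
    unfolding Lun using finB finLb disjL by (intro sum.UNION_disjoint) auto
  also have "\<dots> \<le> (\<Sum>b\<in>B. (?D - 1) * wt b)"
  proof (rule sum_mono)
    fix b assume bB: "b \<in> B"
    show "(\<Sum>e\<in>Lb b. w e) \<le> (?D - 1) * wt b"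
    proof (cases "Lb b = {}")
      case True then show ?thesis by simp
    next
      case False
      then obtain e0 where "e0 \<in> Lb b" by auto
      then have "e0 \<in> ?L" "b \<in> e0" by (auto simp: Lb_def)
      from eB[OF this(1) bB this(2)] obtain r0 r' where pr': "pB (run i) b = Some r'" by blast
      have wtb: "wt b = w {b, r'}" using pr' by (simp add: wt_def)
      have r'R: "r' \<in> R" and bC: "b \<in> set (Cr (run i) r')"
        using Inv_run[of i] pr' unfolding Inv_def by blast+
      then have "b \<in> nbrs E r'" using Inv_run[of i] unfolding Inv_def by blast
      then have r'n: "r' \<in> nbrs E b" by (simp add: nbrs_sym)
      have finN: "finite (nbrs E b)" using nbrs_B[OF bB] finR by (rule finite_subset)
      have sub: "Lb b \<subseteq> (\<lambda>r. {r, b}) ` (nbrs E b - {r'})"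
      proof
        fix e assume "e \<in> Lb b"
        then have "e \<in> ?L" "b \<in> e" by (auto simp: Lb_def)
        from eB[OF this(1) bB this(2)] pr' show "e \<in> (\<lambda>r. {r, b}) ` (nbrs E b - {r'})" by auto
      qed
      have "card (Lb b) \<le> card ((\<lambda>r. {r, b}) ` (nbrs E b - {r'}))"
        using sub finN by (intro card_mono) auto
      also have "\<dots> \<le> card (nbrs E b - {r'})" by (rule card_image_le) (use finN in auto)
      also have "\<dots> = card (nbrs E b) - 1" using r'n finN by simp
      also have "\<dots> \<le> ?D - 1"
      proof -
        have "card (nbrs E b) \<le> ?D" unfolding max_degree_def
          using bB finR finB by (intro Max_ge) auto
        then show ?thesis by simp
      qed
      finally have cardle: "card (Lb b) \<le> ?D - 1" .
      have bnd: "w e \<le> w {b, r'}" if "e \<in> Lb b" for e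
      proof -
        from that have "e \<in> ?L" "b \<in> e" by (auto simp: Lb_def)
        from eB[OF this(1) bB this(2)] pr' show "w e \<le> w {b, r'}" by auto
      qed
      have "(\<Sum>e\<in>Lb b. w e) \<le> card (Lb b) * w {b, r'}"
        using sum_bounded_above[of "Lb b" w "w {b, r'}", OF bnd] by simp
      also have "\<dots> \<le> (?D - 1) * w {b, r'}" using cardle by (rule mult_right_mono) simp
      finally show ?thesis using wtb by simp
    qed
  qed
  also have "\<dots> = (?D - 1) * blue_weight E R B rank w i"
    by (simp add: blue_weight_def wt_def sum_distrib_left)
  finally show ?thesis .
qed

end

theorem lemma5:
  fixes R B :: "'v set" and E :: "'v set set" and rank :: "'v \<Rightarrow> 'v \<Rightarrow> nat"
    and w :: "'v set \<Rightarrow> nat" and i :: nat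
  assumes finR: "finite R" and finB: "finite B" and disj: "R \<inter> B = {}"
    and bip: "E \<subseteq> {{r, b} | r b. r \<in> R \<and> b \<in> B}"
    and no_isolated: "\<forall>v\<in>R \<union> B. \<exists>e\<in>E. v \<in> e"
    and linpref: "\<forall>v\<in>R \<union> B. inj_on (rank v) (nbrs E v)"
    and wpos: "\<forall>e\<in>E. 0 < w e"
    and wresp: "\<forall>v x y. x \<in> nbrs E v \<and> y \<in> nbrs E v \<and> prefers rank v x y
                  \<longrightarrow> w {v, y} \<le> w {v, x}"
    and i2: "2 \<le> i"
  shows "(\<Sum>e\<in>lost E R B rank i. w e)
           \<le> (max_degree E (R \<union> B) - 1) * blue_weight E R B rank w i"
proof -
  interpret gs R B E rank w
    using finR finB disj bip linpref wresp by unfold_locales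
  show ?thesis by (rule main)
qed

end
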